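(* Let $(E,p,X)$ be an étalé space with $X$ a Boolean space. Then $(E,p,X)$ is isomorphic to its double dual $E^{\ast\ast}\to X^{\ast\ast}$ via the map $\beta\colon E\to E^{\ast\ast}$, $a\mapsto K_a=\{x\in E^{\ast}: a\in x\}$ (together with $X\to X^{\ast\ast}$, $u\mapsto N_u=\{y\in X^{\ast}: u\in y\}$).
   Context: A Boolean space is a Hausdorff space with a basis of compact-open sets. An étalé space $(E,p,X)$ is a surjective local homeomorphism $p\colon E\to X$. Its dual Boolean set is $\widetilde p\colon E^{\ast}\to X^{\ast}$, where $X^{\ast}$ is the Boolean algebra of compact-open subsets of $X$, $E^{\ast}$ the set of compact-open local sections (open sets on which $p$ is injective), $\widetilde p(C)=p(C)$, with order $C\le D$ iff $C\subseteq D$ (equivalently $C=D\cap p^{-1}(p(C))$). The dual étalé space of a Boolean set $q\colon Y\to B$ is $\widetilde q\colon Y^{\ast}\to B^{\ast}$ where $Y^{\ast}$ is the set of ultrafilters (maximal proper non-empty down-directed upward-closed subsets) of $Y$ with basis $L(a)=\{G:a\in G\}$, $B^{\ast}$ the ultrafilters of $B$ with basis $M(b)=\{F:b\in F\}$, and $\widetilde q(G)=q(G)$. $E^{\ast\ast}\to X^{\ast\ast}$ is the dual étalé space of $E^{\ast}\to X^{\ast}$. Two étalé spaces $(E,f,X)$, $(F,g,Y)$ are isomorphic if there are homeomorphisms $\varphi\colon E\to F$, $\psi\colon X\to Y$ with $g\varphi=\psi f$. *)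

theory Defs
  imports "HOL-Analysis.Analysis"
begin

definition boolean_space :: "'a topology \<Rightarrow> bool" where
  "boolean_space X \<longleftrightarrow> Hausdorff_space X \<and>
     (\<forall>U x. openin X U \<and> x \<in> U \<longrightarrow> (\<exists>C. compactin X C \<and> openin X C \<and> x \<in> C \<and> C \<subseteq> U))"

definition etale_space :: "'a topology \<Rightarrow> ('a \<Rightarrow> 'b) \<Rightarrow> 'b topology \<Rightarrow> bool" where
  "etale_space E p X \<longleftrightarrow> p ` topspace E = topspace X \<and>
     (\<forall>a\<in>topspace E. \<exists>U. openin E U \<and> a \<in> U \<and> openin X (p ` U) \<and>
        homeomorphic_map (subtopology E U) (subtopology X (p ` U)) p)"

definition compact_opens :: "'b topology \<Rightarrow> 'b set set" where
  "compact_opens X = {C. compactin X C \<and> openin X C}"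

definition local_sections :: "'a topology \<Rightarrow> ('a \<Rightarrow> 'b) \<Rightarrow> 'a set set" where
  "local_sections E p = {C. compactin E C \<and> openin E C \<and> inj_on p C}"

definition pfilter :: "'c set \<Rightarrow> ('c \<Rightarrow> 'c \<Rightarrow> bool) \<Rightarrow> 'c set \<Rightarrow> bool" where
  "pfilter Y le F \<longleftrightarrow> F \<subseteq> Y \<and> F \<noteq> {} \<and> F \<noteq> Y \<and>
     (\<forall>a\<in>F. \<forall>b\<in>Y. le a b \<longrightarrow> b \<in> F) \<and>
     (\<forall>a\<in>F. \<forall>b\<in>F. \<exists>c\<in>F. le c a \<and> le c b)"

definition ultrafilters :: "'c set \<Rightarrow> ('c \<Rightarrow> 'c \<Rightarrow> bool) \<Rightarrow> 'c set set" where
  "ultrafilters Y le = {F. pfilter Y le F \<and> (\<forall>G. pfilter Y le G \<and> F \<subseteq> G \<longrightarrow> G = F)}"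

definition dual_E_top :: "'a topology \<Rightarrow> ('a \<Rightarrow> 'b) \<Rightarrow> 'a set set topology" where
  "dual_E_top E p = topology_generated_by
     ((\<lambda>c. {G \<in> ultrafilters (local_sections E p) (\<subseteq>). c \<in> G}) ` local_sections E p)"

definition dual_X_top :: "'b topology \<Rightarrow> 'b set set topology" where
  "dual_X_top X = topology_generated_by
     ((\<lambda>b. {F \<in> ultrafilters (compact_opens X) (\<subseteq>). b \<in> F}) ` compact_opens X)"

definition dual_proj :: "('a \<Rightarrow> 'b) \<Rightarrow> 'a set set \<Rightarrow> 'b set set" where
  "dual_proj p G = (\<lambda>C. p ` C) ` G"

end

theory Submission
  imports Defs
begin

locale et =
  fixes E :: "'a topology" and p :: "'a \<Rightarrow> 'b" and X :: "'b topology"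
  assumes etale: "etale_space E p X" and haus: "Hausdorff_space X"
    and basis: "\<And>U x. openin X U \<Longrightarrow> x \<in> U \<Longrightarrow> \<exists>C. compactin X C \<and> openin X C \<and> x \<in> C \<and> C \<subseteq> U"
begin

lemma surj: "p ` topspace E = topspace X" using etale unfolding etale_space_def by blast

lemma loc: "a \<in> topspace E \<Longrightarrow> \<exists>U. openin E U \<and> a \<in> U \<and> openin X (p ` U) \<and>
        homeomorphic_map (subtopology E U) (subtopology X (p ` U)) p"
  using etale unfolding etale_space_def by blast

lemma cont: "continuous_map E X p"
proof -
  have "openin E {x \<in> topspace E. p x \<in> V}" if V: "openin X V" for V
  proof (subst openin_subopen, intro ballI)
    fix a assume a: "a \<in> {x \<in> topspace E. p x \<in> V}"
    then obtain U where U: "openin E U" "a \<in> U" "openin X (p ` U)"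
      and h: "homeomorphic_map (subtopology E U) (subtopology X (p ` U)) p" using loc by blast
    have c: "continuous_map (subtopology E U) (subtopology X (p ` U)) p"
      using h homeomorphic_imp_continuous_map by blast
    have "openin (subtopology X (p ` U)) (V \<inter> p ` U)"
      using V by (simp add: openin_subtopology_Int)
    then have "openin (subtopology E U) {x \<in> topspace (subtopology E U). p x \<in> V \<inter> p ` U}"
      using c openin_continuous_map_preimage by blast
    then have "openin E {x \<in> topspace (subtopology E U). p x \<in> V \<inter> p ` U}"
      using U(1) openin_trans_full by blast
    moreover have "{x \<in> topspace (subtopology E U). p x \<in> V \<inter> p ` U} = {x \<in> U. p x \<in> V}"
      using openin_subset[OF U(1)] by auto
    ultimately show "\<exists>T. openin E T \<and> a \<in> T \<and> T \<subseteq> {x \<in> topspace E. p x \<in> V}"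
      using a U(2) openin_subset[OF U(1)] by (intro exI[of _ "{x \<in> U. p x \<in> V}"]) auto
  qed
  moreover have "p ` topspace E \<subseteq> topspace X" using surj by simp
  ultimately show ?thesis unfolding continuous_map_def by blast
qed

lemma openmap: assumes W: "openin E W" shows "openin X (p ` W)"
proof (subst openin_subopen, intro ballI)
  fix y assume "y \<in> p ` W"
  then obtain a where a: "a \<in> W" "y = p a" by blast
  obtain U where U: "openin E U" "a \<in> U" "openin X (p ` U)"
    and h: "homeomorphic_map (subtopology E U) (subtopology X (p ` U)) p"
    using loc a openin_subset[OF W] by blast
  have "openin (subtopology E U) (W \<inter> U)" using W by (simp add: openin_subtopology_Int)
  then have "openin (subtopology X (p ` U)) (p ` (W \<inter> U))"
    using h homeomorphic_imp_open_map open_map_def by blast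
  then have "openin X (p ` (W \<inter> U))" using U(3) openin_trans_full by blast
  then show "\<exists>T. openin X T \<and> y \<in> T \<and> T \<subseteq> p ` W"
    using a U(2) by (intro exI[of _ "p ` (W \<inter> U)"]) auto
qed

lemma sec_homeo:
  assumes C: "openin E C" and inj: "inj_on p C"
  shows "homeomorphic_map (subtopology E C) (subtopology X (p ` C)) p"
proof (rule bijective_open_imp_homeomorphic_map)
  have Ct: "C \<subseteq> topspace E" using openin_subset[OF C] .
  have Cx: "p ` C \<subseteq> topspace X" using Ct surj by blast
  show "continuous_map (subtopology E C) (subtopology X (p ` C)) p"
    by (simp add: continuous_map_in_subtopology continuous_map_from_subtopology cont Ct Cx)
  show "open_map (subtopology E C) (subtopology X (p ` C)) p"
    unfolding open_map_def
  proof (intro allI impI)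
    fix V assume "openin (subtopology E C) V"
    then have V: "openin E V" "V \<subseteq> C" using C openin_trans_full openin_subset by force+
    then have "openin X (p ` V)" using openmap by blast
    moreover have "p ` V = p ` V \<inter> p ` C" using V by blast
    ultimately show "openin (subtopology X (p ` C)) (p ` V)"
      by (metis openin_subtopology_Int)
  qed
  show "p ` topspace (subtopology E C) = topspace (subtopology X (p ` C))"
    using Ct Cx by (auto simp: topspace_subtopology)
  show "inj_on p (topspace (subtopology E C))"
    using inj Ct by (simp add: topspace_subtopology inf_absorb2)
qed

lemma compact_transfer:
  assumes C: "openin E C" and inj: "inj_on p C" and S: "S \<subseteq> C" and K: "compactin X (p ` S)"
  shows "compactin E S"
proof -
  have h: "homeomorphic_map (subtopology E C) (subtopology X (p ` C)) p" using sec_homeo C inj by blast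
  have St: "S \<subseteq> topspace (subtopology E C)" using S openin_subset[OF C] by auto
  have "compactin (subtopology X (p ` C)) (p ` S)" using K S by (simp add: compactin_subtopology image_mono)
  then have "compactin (subtopology E C) S" using homeomorphic_map_compactness[OF h St] by blast
  then show ?thesis by (simp add: compactin_subtopology)
qed

abbreviation "LS \<equiv> local_sections E p"

lemma LS_basis:
  assumes W: "openin E W" and a: "a \<in> W"
  shows "\<exists>C\<in>LS. a \<in> C \<and> C \<subseteq> W"
proof -
  obtain U where U: "openin E U" "a \<in> U" "openin X (p ` U)"
    and h: "homeomorphic_map (subtopology E U) (subtopology X (p ` U)) p"
    using loc a openin_subset[OF W] by blast
  have injU: "inj_on p U" using homeomorphic_imp_injective_map[OF h] openin_subset[OF U(1)]
    by (simp add: topspace_subtopology inf_absorb2)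
  define W' where "W' = W \<inter> U"
  have W': "openin E W'" "a \<in> W'" "inj_on p W'" using W U a injU unfolding W'_def
    by (auto intro: inj_on_subset)
  have "openin X (p ` W')" using openmap W' by blast
  then obtain K where K: "compactin X K" "openin X K" "p a \<in> K" "K \<subseteq> p ` W'"
    using basis W'(2) by blast
  define C where "C = {x \<in> W'. p x \<in> K}"
  have "C = W' \<inter> {x \<in> topspace E. p x \<in> K}" using openin_subset[OF W'(1)] unfolding C_def by auto
  then have Co: "openin E C" using W'(1) K(2) cont openin_continuous_map_preimage by blast
  have pC: "p ` C = K" using K(4) unfolding C_def by auto
  have Ci: "inj_on p C" using W'(3) unfolding C_def by (auto intro: inj_on_subset)
  have "compactin E C" using compact_transfer[OF Co Ci _ ] pC K(1) by blast
  then have "C \<in> LS" using Co Ci unfolding local_sections_def by blast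
  moreover have "a \<in> C" "C \<subseteq> W" using W' K unfolding C_def W'_def by auto
  ultimately show ?thesis by blast
qed

lemma empty_LS: "{} \<in> LS" unfolding local_sections_def by auto

lemma LS_D:
  assumes "C \<in> LS"
  shows "C \<subseteq> topspace E" "openin E C" "compactin E C" "inj_on p C"
    "compactin X (p ` C)" "openin X (p ` C)" "closedin X (p ` C)"
proof -
  show o: "openin E C" "compactin E C" "inj_on p C" using assms unfolding local_sections_def by auto
  show "C \<subseteq> topspace E" using o openin_subset by blast
  show k: "compactin X (p ` C)" using o image_compactin cont by blast
  show "openin X (p ` C)" using o openmap by blast
  show "closedin X (p ` C)" using k haus compactin_imp_closedin by blast
qed

lemma pfilter_no_empty: "pfilter LS (\<subseteq>) G \<Longrightarrow> {} \<notin> G"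
  unfolding pfilter_def by blast

definition "beta a = {C \<in> LS. a \<in> C}"

lemma beta_pfilter:
  assumes a: "a \<in> topspace E" shows "pfilter LS (\<subseteq>) (beta a)"
  unfolding pfilter_def
proof (intro conjI ballI impI)
  show "beta a \<subseteq> LS" unfolding beta_def by auto
  show "beta a \<noteq> {}" using LS_basis[OF openin_topspace a] unfolding beta_def by blast
  show "beta a \<noteq> LS" using empty_LS unfolding beta_def by blast
  show "c \<in> beta a" if "b \<in> beta a" "c \<in> LS" "b \<subseteq> c" for b c
    using that unfolding beta_def by auto
  show "\<exists>c\<in>beta a. c \<subseteq> b \<and> c \<subseteq> d" if "b \<in> beta a" "d \<in> beta a" for b d
  proof -
    have "openin E (b \<inter> d)" "a \<in> b \<inter> d" using that LS_D(2) unfolding beta_def by auto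
    then obtain c where "c \<in> LS" "a \<in> c" "c \<subseteq> b \<inter> d" using LS_basis by blast
    then show ?thesis unfolding beta_def by blast
  qed
qed

lemma beta_ultra:
  assumes a: "a \<in> topspace E" shows "beta a \<in> ultrafilters LS (\<subseteq>)"
  unfolding ultrafilters_def
proof (intro CollectI conjI allI impI beta_pfilter[OF a])
  fix G assume G: "pfilter LS (\<subseteq>) G \<and> beta a \<subseteq> G"
  have "G \<subseteq> beta a"
  proof
    fix C assume C: "C \<in> G"
    have CLS: "C \<in> LS" using C G unfolding pfilter_def by blast
    show "C \<in> beta a"
    proof (rule ccontr)
      assume "C \<notin> beta a"
      then have aC: "a \<notin> C" using CLS unfolding beta_def by blast
      obtain D where D: "D \<in> beta a" using beta_pfilter[OF a] unfolding pfilter_def by blast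
      then have DG: "D \<in> G" using G by blast
      obtain c where c: "c \<in> G" "c \<subseteq> C" "c \<subseteq> D" using G C DG unfolding pfilter_def by blast
      have cLS: "c \<in> LS" using c G unfolding pfilter_def by blast
      have DLS: "D \<in> LS" "a \<in> D" using D unfolding beta_def by auto
      have pa: "p a \<notin> p ` c"
      proof
        assume "p a \<in> p ` c"
        then obtain x where "x \<in> c" "p x = p a" by auto
        then have "x = a" using LS_D(4)[OF DLS(1)] c(3) DLS(2) by (auto simp: inj_on_def)
        then show False using aC c(2) \<open>x \<in> c\<close> by blast
      qed
      define W where "W = D \<inter> {x \<in> topspace E. p x \<in> topspace X - p ` c}"
      have "openin X (topspace X - p ` c)" using LS_D(7)[OF cLS] closedin_def by blast
      then have "openin E {x \<in> topspace E. p x \<in> topspace X - p ` c}"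
        using cont openin_continuous_map_preimage by blast
      then have "openin E W" unfolding W_def using LS_D(2)[OF DLS(1)] by (rule openin_Int[rotated])
      moreover have "a \<in> W" unfolding W_def using DLS a pa surj by auto
      ultimately obtain D' where D': "D' \<in> LS" "a \<in> D'" "D' \<subseteq> W" using LS_basis by blast
      then have "D' \<in> G" using G unfolding beta_def by blast
      then obtain e where e: "e \<in> G" "e \<subseteq> c" "e \<subseteq> D'" using G c(1) unfolding pfilter_def by blast
      have "c \<inter> D' = {}" using D'(3) unfolding W_def by auto
      then have "e = {}" using e by blast
      then show False using e(1) G pfilter_no_empty by blast
    qed
  qed
  then show "G = beta a" using G by blast
qed

lemma beta_surj:
  assumes G: "G \<in> ultrafilters LS (\<subseteq>)"
  shows "\<exists>a\<in>topspace E. G = beta a"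
proof -
  have Gp: "pfilter LS (\<subseteq>) G" and Gmax: "\<And>H. pfilter LS (\<subseteq>) H \<Longrightarrow> G \<subseteq> H \<Longrightarrow> H = G"
    using G unfolding ultrafilters_def by auto
  have GLS: "G \<subseteq> LS" and dir: "\<And>b d. b \<in> G \<Longrightarrow> d \<in> G \<Longrightarrow> \<exists>c\<in>G. c \<subseteq> b \<and> c \<subseteq> d"
    and ne: "G \<noteq> {}"
    using Gp unfolding pfilter_def by auto
  have noe: "{} \<notin> G" using pfilter_no_empty Gp by blast
  obtain C where C: "C \<in> G" using ne by blast
  have CLS: "C \<in> LS" using C GLS by blast
  define G' where "G' = {d \<in> G. d \<subseteq> C}"
  define U where "U = (\<lambda>d. p ` d) ` G'"
  have fin: "\<exists>e\<in>G'. e \<subseteq> \<Inter>F" if "finite F" "F \<noteq> {}" "F \<subseteq> G'" for F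
    using that
  proof (induction F rule: finite_ne_induct)
    case (singleton x) then show ?case by blast
  next
    case (insert x F)
    then obtain e where e: "e \<in> G'" "e \<subseteq> \<Inter>F" by blast
    have "x \<in> G" "e \<in> G" using insert e unfolding G'_def by auto
    then obtain c where "c \<in> G" "c \<subseteq> x" "c \<subseteq> e" using dir by blast
    moreover have "c \<subseteq> C" using \<open>c \<subseteq> e\<close> e(1) unfolding G'_def by auto
    ultimately show ?case using e unfolding G'_def by (intro bexI[of _ c]) auto
  qed
  have "p ` C \<inter> \<Inter>U \<noteq> {}"
  proof -
    have k: "compactin X (p ` C)" using LS_D(5)[OF CLS] .
    have cl: "\<forall>K\<in>U. closedin X K" unfolding U_def G'_def using GLS LS_D(7) by blast
    have "p ` C \<inter> \<Inter>F \<noteq> {}" if F: "finite F" "F \<subseteq> U" for F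
    proof -
      obtain F' where F': "F' \<subseteq> G'" "finite F'" "F = (\<lambda>d. p ` d) ` F'"
        using finite_subset_image[OF F(1) F(2)[unfolded U_def]] by blast
      obtain e where e: "e \<in> G'" "e \<subseteq> \<Inter>F'"
      proof (cases "F' = {}")
        case True then show ?thesis using that[of C] C unfolding G'_def by auto
      next
        case False then show ?thesis using fin[OF F'(2) False F'(1)] that by blast
      qed
      have "e \<noteq> {}" using e noe unfolding G'_def by auto
      moreover have "p ` e \<subseteq> p ` C \<inter> \<Inter>F" using e F'(3) unfolding G'_def by auto
      ultimately show ?thesis by blast
    qed
    then have "\<forall>F. finite F \<and> F \<subseteq> U \<longrightarrow> p ` C \<inter> \<Inter>F \<noteq> {}" by blast
    then show ?thesis using compactin_fip[THEN iffD1, OF k, THEN conjunct2, rule_format, of U] cl by blast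
  qed
  then obtain x where x: "x \<in> p ` C" "x \<in> \<Inter>U" by blast
  then obtain a where a: "a \<in> C" "x = p a" by blast
  have injC: "inj_on p C" using LS_D(4)[OF CLS] .
  have "G \<subseteq> beta a"
  proof
    fix e assume e: "e \<in> G"
    then obtain d where d: "d \<in> G" "d \<subseteq> e" "d \<subseteq> C" using dir C by blast
    then have "x \<in> p ` d" using x(2) unfolding U_def G'_def by blast
    then obtain a' where "a' \<in> d" "p a' = p a" using a by auto
    then have "a' = a" using injC d(3) a(1) by (auto simp: inj_on_def)
    then show "e \<in> beta a" using \<open>a' \<in> d\<close> d e GLS unfolding beta_def by auto
  qed
  moreover have aE: "a \<in> topspace E" using a(1) LS_D(1)[OF CLS] by blast
  ultimately have "beta a = G" using Gmax beta_pfilter by blast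
  then show ?thesis using aE by blast
qed

lemma beta_inj: "inj_on beta (topspace E)"
proof (rule inj_onI)
  fix a b assume a: "a \<in> topspace E" and b: "b \<in> topspace E" and eq: "beta a = beta b"
  show "a = b"
  proof (rule ccontr)
    assume ne: "a \<noteq> b"
    obtain W where W: "openin E W" "a \<in> W" "b \<notin> W \<or> p a = p b"
    proof (cases "p a = p b")
      case True then show ?thesis using that[of "topspace E"] a by blast
    next
      case False
      have "p a \<in> topspace X" "p b \<in> topspace X" using a b surj by blast+
      then obtain V V' where V: "openin X V" "openin X V'" "p a \<in> V" "p b \<in> V'" "disjnt V V'"
        using haus False unfolding Hausdorff_space_def by metis
      have o: "openin E {x \<in> topspace E. p x \<in> V}" using V(1) cont openin_continuous_map_preimage by blast
      have "p b \<notin> V" using V(4,5) by (auto simp: disjnt_def)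
      then have "b \<notin> {x \<in> topspace E. p x \<in> V}" by blast
      moreover have "a \<in> {x \<in> topspace E. p x \<in> V}" using a V(3) by blast
      ultimately show ?thesis using that[of "{x \<in> topspace E. p x \<in> V}"] o by blast
    qed
    then obtain D where D: "D \<in> LS" "a \<in> D" "D \<subseteq> W" using LS_basis by blast
    then have "D \<in> beta b" using eq unfolding beta_def by blast
    then have bD: "b \<in> D" unfolding beta_def by blast
    then have "p a = p b" using W D by blast
    then show False using LS_D(4)[OF D(1)] D(2) bD ne inj_onD by metis
  qed
qed

lemma beta_img: "beta ` topspace E = ultrafilters LS (\<subseteq>)"
  using beta_ultra beta_surj by blast

lemma L_img:
  assumes c: "c \<in> LS" shows "{G \<in> ultrafilters LS (\<subseteq>). c \<in> G} = beta ` c"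
proof
  show "beta ` c \<subseteq> {G \<in> ultrafilters LS (\<subseteq>). c \<in> G}"
    using beta_ultra LS_D(1)[OF c] c unfolding beta_def by auto
  show "{G \<in> ultrafilters LS (\<subseteq>). c \<in> G} \<subseteq> beta ` c"
  proof
    fix G assume "G \<in> {G \<in> ultrafilters LS (\<subseteq>). c \<in> G}"
    then obtain a where "a \<in> topspace E" "G = beta a" "c \<in> G" using beta_surj by blast
    then show "G \<in> beta ` c" unfolding beta_def by blast
  qed
qed

lemma beta_homeo: "homeomorphic_map E (dual_E_top E p) beta"
proof -
  define S where "S = (\<lambda>c. {G \<in> ultrafilters LS (\<subseteq>). c \<in> G}) ` LS"
  have D: "dual_E_top E p = topology_generated_by S" unfolding dual_E_top_def S_def by simp
  have top: "\<Union>S = ultrafilters LS (\<subseteq>)"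
  proof
    show "\<Union>S \<subseteq> ultrafilters LS (\<subseteq>)" unfolding S_def by auto
    show "ultrafilters LS (\<subseteq>) \<subseteq> \<Union>S"
    proof
      fix G assume G: "G \<in> ultrafilters LS (\<subseteq>)"
      then have "G \<noteq> {}" "G \<subseteq> LS" unfolding ultrafilters_def pfilter_def by auto
      then obtain c where "c \<in> G" "c \<in> LS" by blast
      then show "G \<in> \<Union>S" using G unfolding S_def by blast
    qed
  qed
  show ?thesis unfolding D
  proof (rule bijective_open_imp_homeomorphic_map)
    show "continuous_map E (topology_generated_by S) beta"
    proof (rule continuous_on_generated_topo)
      fix U assume "U \<in> S"
      then obtain c where c0: "c \<in> LS" "U = {G \<in> ultrafilters LS (\<subseteq>). c \<in> G}" unfolding S_def by blast
      then have c: "c \<in> LS" "U = beta ` c" using L_img[OF c0(1)] by simp_all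
      have "beta -` U \<inter> topspace E = c"
      proof (rule equalityI)
        show "beta -` U \<inter> topspace E \<subseteq> c"
        proof (rule subsetI)
          fix x assume "x \<in> beta -` U \<inter> topspace E"
          then have x: "beta x \<in> beta ` c" "x \<in> topspace E" using c(2) by simp_all
          then obtain y where y: "y \<in> c" "beta x = beta y" by (metis imageE)
          have yt: "y \<in> topspace E" using y(1) LS_D(1)[OF c(1)] by blast
          have "x = y" by (rule inj_onD[OF beta_inj y(2) x(2) yt])
          then show "x \<in> c" using y by simp
        qed
        show "c \<subseteq> beta -` U \<inter> topspace E" using c(2) LS_D(1)[OF c(1)] by blast
      qed
      then show "openin E (beta -` U \<inter> topspace E)" using LS_D(2)[OF c(1)] by simp
    next
      show "beta ` topspace E \<subseteq> \<Union>S" using top beta_img by simp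
    qed
    show "open_map E (topology_generated_by S) beta"
      unfolding open_map_def
    proof (intro allI impI)
      fix W assume W: "openin E W"
      have "beta ` W = \<Union>{beta ` c | c. c \<in> LS \<and> c \<subseteq> W}"
      proof
        show "beta ` W \<subseteq> \<Union>{beta ` c | c. c \<in> LS \<and> c \<subseteq> W}"
        proof
          fix G assume "G \<in> beta ` W"
          then obtain a where a: "a \<in> W" "G = beta a" by blast
          then obtain c where "c \<in> LS" "a \<in> c" "c \<subseteq> W" using LS_basis[OF W] by blast
          then show "G \<in> \<Union>{beta ` c | c. c \<in> LS \<and> c \<subseteq> W}" using a by blast
        qed
        show "\<Union>{beta ` c | c. c \<in> LS \<and> c \<subseteq> W} \<subseteq> beta ` W"
        proof
          fix G assume "G \<in> \<Union>{beta ` c | c. c \<in> LS \<and> c \<subseteq> W}"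
          then obtain c where "c \<in> LS" "c \<subseteq> W" "G \<in> beta ` c" by blast
          then show "G \<in> beta ` W" by blast
        qed
      qed
      moreover have "openin (topology_generated_by S) K" if K: "K \<in> {beta ` c | c. c \<in> LS \<and> c \<subseteq> W}" for K
      proof -
        obtain c where "c \<in> LS" "K = beta ` c" using K by blast
        then have "K = {G \<in> ultrafilters LS (\<subseteq>). c \<in> G}" "c \<in> LS" using L_img by simp_all
        then have "K \<in> S" unfolding S_def by blast
        then show ?thesis by (rule topology_generated_by_Basis)
      qed
      then have "openin (topology_generated_by S) (\<Union>{beta ` c | c. c \<in> LS \<and> c \<subseteq> W})"
        by (intro openin_Union) blast
      ultimately show "openin (topology_generated_by S) (beta ` W)" by simp
    qed
    show "beta ` topspace E = topspace (topology_generated_by S)" using top beta_img by simp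
    show "inj_on beta (topspace E)" by (rule beta_inj)
  qed
qed

lemma ptop: "x \<in> topspace E \<Longrightarrow> p x \<in> topspace X" using surj by blast

lemma LS_union:
  assumes S: "S \<in> LS" and D: "D \<in> LS"
  shows "S \<union> {x \<in> D. p x \<notin> p ` S} \<in> LS \<and> p ` (S \<union> {x \<in> D. p x \<notin> p ` S}) = p ` S \<union> p ` D"
proof -
  define R where "R = {x \<in> D. p x \<notin> p ` S}"
  have R1: "R = D \<inter> {x \<in> topspace E. p x \<in> topspace X - p ` S}"
    unfolding R_def using LS_D(1)[OF D] ptop by auto
  have "openin X (topspace X - p ` S)" using LS_D(7)[OF S] closedin_def by blast
  then have "openin E {x \<in> topspace E. p x \<in> topspace X - p ` S}"
    using cont openin_continuous_map_preimage by blast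
  then have Ro: "openin E R" unfolding R1 using LS_D(2)[OF D] by (rule openin_Int[rotated])
  have RD: "R \<subseteq> D" unfolding R_def by blast
  have Ri: "inj_on p R" using LS_D(4)[OF D] RD inj_on_subset by blast
  have pR: "p ` R = p ` D \<inter> (topspace X - p ` S)" unfolding R_def using LS_D(1)[OF D] ptop by auto
  have "closedin X (topspace X - p ` S)" using LS_D(6)[OF S] by (simp add: closedin_diff)
  then have "closedin X (p ` R)" unfolding pR using LS_D(7)[OF D] by (simp add: closedin_Int)
  then have "compactin X (p ` R)" using closed_compactin[OF LS_D(5)[OF D]] pR by blast
  then have Rc: "compactin E R" using compact_transfer[OF LS_D(2)[OF D] LS_D(4)[OF D] RD] by blast
  have o: "openin E (S \<union> R)" using Ro LS_D(2)[OF S] by blast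
  have c: "compactin E (S \<union> R)" using Rc LS_D(3)[OF S] compactin_Un by blast
  have d: "p ` R \<inter> p ` S = {}" unfolding R_def by auto
  have "p ` (S - R) \<subseteq> p ` S" "p ` (R - S) \<subseteq> p ` R" by (rule image_mono, blast)+
  then have "p ` (S - R) \<inter> p ` (R - S) = {}" using d by blast
  then have i: "inj_on p (S \<union> R)" using Ri LS_D(4)[OF S] inj_on_Un by blast
  have "S \<union> R \<in> LS" using o c i unfolding local_sections_def by blast
  moreover have "p ` (S \<union> R) = p ` S \<union> p ` D" unfolding R_def by auto
  ultimately show ?thesis unfolding R_def by simp
qed

lemma LS_finite:
  assumes "finite DD" "DD \<subseteq> LS"
  shows "\<exists>S\<in>LS. p ` S = \<Union>((\<lambda>d. p ` d) ` DD)"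
  using assms
proof (induction DD rule: finite_induct)
  case empty then show ?case using empty_LS by (intro bexI[of _ "{}"]) auto
next
  case (insert D DD)
  then obtain S where S: "S \<in> LS" "p ` S = \<Union>((\<lambda>d. p ` d) ` DD)" by blast
  have D: "D \<in> LS" using insert by blast
  show ?case using LS_union[OF S(1) D] S(2) by (intro bexI[of _ "S \<union> {x \<in> D. p x \<notin> p ` S}"]) auto
qed

lemma section_over:
  assumes B: "compactin X B" "openin X B"
  shows "\<exists>S\<in>LS. p ` S = B"
proof -
  define U where "U = (\<lambda>d. p ` d) ` {D \<in> LS. p ` D \<subseteq> B}"
  have Uo: "\<forall>V\<in>U. openin X V" unfolding U_def using LS_D(6) by blast
  have cov: "B \<subseteq> \<Union>U"
  proof
    fix x assume x: "x \<in> B"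
    then have "x \<in> topspace X" using openin_subset[OF B(2)] by blast
    then obtain e where e: "e \<in> topspace E" "x = p e" using surj by blast
    have "openin E {y \<in> topspace E. p y \<in> B}" using B(2) cont openin_continuous_map_preimage by blast
    moreover have "e \<in> {y \<in> topspace E. p y \<in> B}" using e x by blast
    ultimately obtain D where D: "D \<in> LS" "e \<in> D" "D \<subseteq> {y \<in> topspace E. p y \<in> B}"
      using LS_basis by blast
    then have "p ` D \<in> U" "x \<in> p ` D" unfolding U_def using e by auto
    then show "x \<in> \<Union>U" by blast
  qed
  obtain F where F: "finite F" "F \<subseteq> U" "B \<subseteq> \<Union>F"
    using compactin_def[THEN iffD1, OF B(1), THEN conjunct2, rule_format, of U] Uo cov by blast
  obtain DD where DD: "DD \<subseteq> {D \<in> LS. p ` D \<subseteq> B}" "finite DD" "F = (\<lambda>d. p ` d) ` DD"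
    using finite_subset_image[OF F(1) F(2)[unfolded U_def]] by blast
  obtain S where S: "S \<in> LS" "p ` S = \<Union>((\<lambda>d. p ` d) ` DD)" using LS_finite[OF DD(2)] DD(1) by blast
  have "p ` S = B" using S(2) DD F(3) by blast
  then show ?thesis using S(1) by blast
qed

lemma proj_beta:
  assumes a: "a \<in> topspace E"
  shows "dual_proj p (beta a) = {B \<in> compact_opens X. p a \<in> B}"
proof
  show "dual_proj p (beta a) \<subseteq> {B \<in> compact_opens X. p a \<in> B}"
  proof
    fix B assume "B \<in> dual_proj p (beta a)"
    then obtain C where C: "C \<in> beta a" "B = p ` C" unfolding dual_proj_def by blast
    then have C2: "C \<in> LS" "a \<in> C" unfolding beta_def by simp_all
    have "compactin X B" "openin X B" "p a \<in> B" using LS_D(5,6)[OF C2(1)] C(2) C2(2) by simp_all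
    then show "B \<in> {B \<in> compact_opens X. p a \<in> B}" unfolding compact_opens_def by simp
  qed
  show "{B \<in> compact_opens X. p a \<in> B} \<subseteq> dual_proj p (beta a)"
  proof
    fix B assume "B \<in> {B \<in> compact_opens X. p a \<in> B}"
    then have B: "compactin X B" "openin X B" "p a \<in> B" unfolding compact_opens_def by auto
    have "openin E {y \<in> topspace E. p y \<in> B}" using B(2) cont openin_continuous_map_preimage by blast
    moreover have "a \<in> {y \<in> topspace E. p y \<in> B}" using a B by blast
    ultimately obtain D where D: "D \<in> LS" "a \<in> D" "D \<subseteq> {y \<in> topspace E. p y \<in> B}"
      using LS_basis by blast
    obtain S where S: "S \<in> LS" "p ` S = B" using section_over B by blast
    define C where "C = D \<union> {x \<in> S. p x \<notin> p ` D}"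
    have U: "C \<in> LS \<and> p ` C = p ` D \<union> p ` S" unfolding C_def by (rule LS_union[OF D(1) S(1)])
    have pD: "p ` D \<subseteq> B" using D(3) by blast
    have "p ` C = B" using conjunct2[OF U] S(2) pD by blast
    moreover have "a \<in> C" unfolding C_def using D(2) by blast
    then have "C \<in> beta a" unfolding beta_def using conjunct1[OF U] by blast
    ultimately show "B \<in> dual_proj p (beta a)" unfolding dual_proj_def by (metis image_eqI)
  qed
qed

lemma main_E:
  "homeomorphic_map E (dual_E_top E p) (\<lambda>a. {C \<in> local_sections E p. a \<in> C}) \<and>
   (\<forall>a\<in>topspace E. dual_proj p {C \<in> local_sections E p. a \<in> C} = {B \<in> compact_opens X. p a \<in> B})"
proof -
  have b: "(\<lambda>a. {C \<in> local_sections E p. a \<in> C}) = beta" by (rule ext) (simp add: beta_def)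
  have "\<forall>a\<in>topspace E. dual_proj p {C \<in> local_sections E p. a \<in> C} = {B \<in> compact_opens X. p a \<in> B}"
    using proj_beta unfolding beta_def by blast
  then show ?thesis using beta_homeo unfolding b by blast
qed

end

lemma etale_id: "etale_space X id X"
  unfolding etale_space_def
proof (intro conjI ballI)
  show "id ` topspace X = topspace X" by simp
  fix a assume "a \<in> topspace X"
  then show "\<exists>U. openin X U \<and> a \<in> U \<and> openin X (id ` U) \<and>
      homeomorphic_map (subtopology X U) (subtopology X (id ` U)) id"
    by (intro exI[of _ "topspace X"]) (simp add: homeomorphic_map_id)
qed

theorem proposition3p14:
  fixes E :: "'a topology" and X :: "'b topology" and p :: "'a \<Rightarrow> 'b"
  assumes "etale_space E p X" and "boolean_space X"
  shows "homeomorphic_map E (dual_E_top E p) (\<lambda>a. {C \<in> local_sections E p. a \<in> C}) \<and>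
         homeomorphic_map X (dual_X_top X) (\<lambda>u. {B \<in> compact_opens X. u \<in> B}) \<and>
         (\<forall>a\<in>topspace E. dual_proj p {C \<in> local_sections E p. a \<in> C} =
                           {B \<in> compact_opens X. p a \<in> B})"
proof -
  have H: "Hausdorff_space X" and bas: "\<And>U x. openin X U \<Longrightarrow> x \<in> U \<Longrightarrow> \<exists>C. compactin X C \<and> openin X C \<and> x \<in> C \<and> C \<subseteq> U"
    using assms(2) unfolding boolean_space_def by blast+
  interpret e1: et E p X by (rule et.intro[OF assms(1) H bas])
  interpret e2: et X id X by (rule et.intro[OF etale_id H bas])
  have ls: "local_sections X id = compact_opens X"
    unfolding local_sections_def compact_opens_def by simp
  have dt: "dual_E_top X id = dual_X_top X"
    unfolding dual_E_top_def dual_X_top_def ls ..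
  have x: "homeomorphic_map X (dual_X_top X) (\<lambda>u. {B \<in> compact_opens X. u \<in> B})"
    using conjunct1[OF e2.main_E] unfolding ls dt .
  show ?thesis using conjunct1[OF e1.main_E] x conjunct2[OF e1.main_E] by (intro conjI)
qed

end
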